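(* Let $n\ge4$ be even, $p\ge n+1$ an integer, $c_1$ a positive integer, $a_k=pc_k$, $c_{k+1}=p^2c_k$, and let $T$, $I^{(k)}_i$ and $\lambda_j$ be as in the context. Then for every $k\ge0$: (1) $\lambda_1(I^{(k)}_3)=\lambda_1(I^{(k)}_5)=\cdots=\lambda_1(I^{(k)}_{n-1})$; (2) $\lambda_1(I^{(k)}_2)=\lambda_1(I^{(k)}_4)=\cdots=\lambda_1(I^{(k)}_{n-2})$; (3) for every odd $m$ with $3\le m\le n-1$: $\lambda_m(I^{(k)}_t)$ takes the same value for all odd $t\in\{3,\dots,n-1\}$ with $t\ne m$, and $\lambda_m(I^{(k)}_t)$ takes the same value for all even $t\in\{2,\dots,n-2\}$ with $t\ne m-1$.
   Context: $\pi$ is the permutation of $\{1,\dots,n\}$ with top row $1,2,\dots,n$ and bottom row $n,3,2,5,4,\dots,n-1,n-2,1$. Right Rauzy induction: step "0" when the rightmost domain (top) interval is longer, "1" when the rightmost image (bottom) interval is longer. For $a,c>0$, $\dot\gamma_{m,a}=1^{n-1-m}0^a10^2$, $\gamma_{a,c}=0\,\dot\gamma_{n-2,a}\cdots\dot\gamma_{2,a}\,1^{c(n-1)}$; its transition matrix $\Theta_{a,c}$ (old lengths $=\Theta_{a,c}\cdot$new lengths) has row $1=(1,c,\dots,c)$, row $n=(1,c+1,\dots,c+1)$, and for $1\le i\le(n-2)/2$: row $2i$ has $0$ in column 1, $2$ in columns $2i,2i+1$, $1$ in the other columns among $2,\dots,n$; row $2i+1$ has $a$ in column $2i$, $a+1$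 in column $2i+1$, $0$ elsewhere. $\Theta_k=\Theta_{a_k,c_k}$. $T$ is an IET of $[0,1)$ with permutation $\pi$ whose right Rauzy induction path is $\gamma_{a_1,c_1}\gamma_{a_2,c_2}\cdots$; $I^{(k)}$ is the interval on which the induced map lives after the first $k$ blocks and $I^{(k)}_1,\dots,I^{(k)}_n$ its exchanged subintervals ($I^{(0)}_i$ are the initial subintervals of $T$); lengths satisfy $\ell^{(k-1)}=\Theta_k\ell^{(k)}$. For $v\ge0$, $|v|$ is the sum of entries and $\overline v=v/|v|$. $\lambda_j$ denotes the $T$-invariant Borel probability measure such that for every $k\ge0$, $(\lambda_j(I^{(k)}_i))_i$ is a positive multiple of $\lim_{m\to\infty}\overline{\Theta_{k+1}\cdots\Theta_me_j}$. *)

theory Defs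
  imports "HOL-Probability.Probability"
begin

text \<open>Labels are 1..n.  A (labelled) permutation is a pair of lists (top row, bottom row):
  the top row is the order of the domain subintervals, the bottom row the order of the
  image subintervals.  Length vectors are functions nat => real (only labels 1..n matter).\<close>

definition pi0 :: "nat \<Rightarrow> nat list \<times> nat list" where
  "pi0 n = ([1..<n+1], n # concat (map (\<lambda>i. [2*i+1, 2*i]) [1..<n div 2]) @ [1])"

definition start :: "nat list \<Rightarrow> (nat \<Rightarrow> real) \<Rightarrow> nat \<Rightarrow> real" where
  "start xs l i = sum_list (map l (takeWhile (\<lambda>z. z \<noteq> i) xs))"

definition subint :: "nat list \<Rightarrow> (nat \<Rightarrow> real) \<Rightarrow> nat \<Rightarrow> real set" where
  "subint xs l i = {start xs l i ..< start xs l i + l i}"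

definition iet_map :: "nat list \<times> nat list \<Rightarrow> (nat \<Rightarrow> real) \<Rightarrow> real \<Rightarrow> real" where
  "iet_map p l x = (SOME y. \<exists>i\<in>set (fst p). x \<in> subint (fst p) l i \<and>
      y = x - start (fst p) l i + start (snd p) l i)"

definition ins_after :: "nat \<Rightarrow> nat \<Rightarrow> nat list \<Rightarrow> nat list" where
  "ins_after x y xs = takeWhile (\<lambda>z. z \<noteq> x) xs @ [x, y] @ tl (dropWhile (\<lambda>z. z \<noteq> x) xs)"

definition rauzy_type :: "(nat list \<times> nat list) \<times> (nat \<Rightarrow> real) \<Rightarrow> nat option" where
  "rauzy_type s = (let (t, b) = fst s; l = snd s in
     if l (last t) > l (last b) then Some 0
     else if l (last b) > l (last t) then Some 1 else None)"

definition rauzy_step ::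
  "(nat list \<times> nat list) \<times> (nat \<Rightarrow> real) \<Rightarrow> (nat list \<times> nat list) \<times> (nat \<Rightarrow> real)" where
  "rauzy_step s = (let (t, b) = fst s; l = snd s; \<alpha> = last t; \<beta> = last b in
     if l \<alpha> > l \<beta> then ((t, ins_after \<alpha> \<beta> (butlast b)), l(\<alpha> := l \<alpha> - l \<beta>))
     else if l \<beta> > l \<alpha> then ((ins_after \<beta> \<alpha> (butlast t), b), l(\<beta> := l \<beta> - l \<alpha>))
     else s)"

primrec rauzy_state ::
  "(nat list \<times> nat list) \<times> (nat \<Rightarrow> real) \<Rightarrow> nat \<Rightarrow> (nat list \<times> nat list) \<times> (nat \<Rightarrow> real)" where
  "rauzy_state s 0 = s"
| "rauzy_state s (Suc N) = rauzy_step (rauzy_state s N)"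

definition dgamma :: "nat \<Rightarrow> nat \<Rightarrow> nat \<Rightarrow> nat list" where
  "dgamma n m a = replicate (n - 1 - m) 1 @ replicate a 0 @ [1, 0, 0]"

definition gamma :: "nat \<Rightarrow> nat \<Rightarrow> nat \<Rightarrow> nat list" where
  "gamma n a c = 0 # concat (map (\<lambda>m. dgamma n m a) (rev (map (\<lambda>i. 2*i) [1..<n div 2])))
                   @ replicate (c * (n - 1)) 1"

definition blocks :: "nat \<Rightarrow> (nat \<Rightarrow> nat) \<Rightarrow> (nat \<Rightarrow> nat) \<Rightarrow> nat \<Rightarrow> nat list" where
  "blocks n a c k = concat (map (\<lambda>j. gamma n (a j) (c j)) [1..<k+1])"

definition Theta :: "nat \<Rightarrow> nat \<Rightarrow> nat \<Rightarrow> nat \<Rightarrow> nat \<Rightarrow> real" where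
  "Theta n a c i j =
    (if i = 1 then (if j = 1 then 1 else real c)
     else if i = n then (if j = 1 then 1 else real c + 1)
     else if even i then (if j = 1 then 0 else if j = i \<or> j = i + 1 then 2 else 1)
     else (if j = i - 1 then real a else if j = i then real a + 1 else 0))"

definition matmul :: "nat \<Rightarrow> (nat \<Rightarrow> nat \<Rightarrow> real) \<Rightarrow> (nat \<Rightarrow> nat \<Rightarrow> real) \<Rightarrow> nat \<Rightarrow> nat \<Rightarrow> real" where
  "matmul n A B i j = (\<Sum>l=1..n. A i l * B l j)"

primrec ThetaProd :: "nat \<Rightarrow> (nat \<Rightarrow> nat) \<Rightarrow> (nat \<Rightarrow> nat) \<Rightarrow> nat \<Rightarrow> nat \<Rightarrow> nat \<Rightarrow> nat \<Rightarrow> real" where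
  "ThetaProd n a c k 0 = (\<lambda>i j. if i = j then 1 else 0)"
| "ThetaProd n a c k (Suc d) = matmul n (ThetaProd n a c k d) (Theta n (a (k+d+1)) (c (k+d+1)))"

definition normcol :: "nat \<Rightarrow> (nat \<Rightarrow> nat) \<Rightarrow> (nat \<Rightarrow> nat) \<Rightarrow> nat \<Rightarrow> nat \<Rightarrow> nat \<Rightarrow> nat \<Rightarrow> real" where
  "normcol n a c k j d i = ThetaProd n a c k d i j / (\<Sum>r=1..n. ThetaProd n a c k d r j)"

end

theory Submission
  imports Defs
begin


definition swp :: "nat \<Rightarrow> nat \<Rightarrow> nat \<Rightarrow> nat" where
  "swp u v x = (if x = u then v else if x = v then u else if x = u+1 then v+1
     else if x = v+1 then u+1 else x)"

lemma swp_inv: "even u \<Longrightarrow> even v \<Longrightarrow> swp u v (swp u v x) = x"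
  unfolding swp_def by auto

lemma swp_range: "even u \<Longrightarrow> even v \<Longrightarrow> 2 \<le> u \<Longrightarrow> 2 \<le> v \<Longrightarrow> u+2 \<le> n \<Longrightarrow> v+2 \<le> n
  \<Longrightarrow> x \<in> {1..n} \<Longrightarrow> swp u v x \<in> {1..n}"
  unfolding swp_def by auto

lemma swp_bij: "even u \<Longrightarrow> even v \<Longrightarrow> 2 \<le> u \<Longrightarrow> 2 \<le> v \<Longrightarrow> u+2 \<le> n \<Longrightarrow> v+2 \<le> n
  \<Longrightarrow> bij_betw (swp u v) {1..n} {1..n}"
  apply (rule bij_betw_byWitness[where f'="swp u v"])
  using swp_inv swp_range by auto

lemma swp_inj: "even u \<Longrightarrow> even v \<Longrightarrow> (swp u v x = swp u v y) = (x = y)"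
  by (metis swp_inv)

lemma swp_1: "2 \<le> u \<Longrightarrow> 2 \<le> v \<Longrightarrow> (swp u v x = 1) = (x = 1)"
  unfolding swp_def by auto

lemma swp_n: "even u \<Longrightarrow> even v \<Longrightarrow> even n \<Longrightarrow> u+2 \<le> n \<Longrightarrow> v+2 \<le> n \<Longrightarrow> (swp u v x = n) = (x = n)"
  unfolding swp_def by auto

lemma swp_even: "even u \<Longrightarrow> even v \<Longrightarrow> even (swp u v x) = even x"
  unfolding swp_def by auto

lemma swp_suc: "even u \<Longrightarrow> even v \<Longrightarrow> even x \<Longrightarrow> swp u v (x+1) = swp u v x + 1"
  unfolding swp_def by auto

lemma swp_pred: "even u \<Longrightarrow> even v \<Longrightarrow> 2 \<le> u \<Longrightarrow> 2 \<le> v \<Longrightarrow> odd x \<Longrightarrow> swp u v (x-1) = swp u v x - 1"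
  unfolding swp_def by (cases x) auto

lemma Theta_swp: "even u \<Longrightarrow> even v \<Longrightarrow> 2 \<le> u \<Longrightarrow> 2 \<le> v \<Longrightarrow> u+2 \<le> n \<Longrightarrow> v+2 \<le> n
  \<Longrightarrow> even n \<Longrightarrow> Theta n a c (swp u v i) (swp u v j) = Theta n a c i j"
proof -
  assume a: "even u" "even v" "2 \<le> u" "2 \<le> v" "u+2 \<le> n" "v+2 \<le> n" "even n"
  have e1: "\<And>x. (swp u v x = 1) = (x = 1)" using swp_1[OF a(3,4)] .
  have e2: "\<And>x. (swp u v x = n) = (x = n)" using swp_n[OF a(1,2,7,5,6)] .
  have e3: "\<And>x. even (swp u v x) = even x" using swp_even[OF a(1,2)] .
  have e4: "\<And>x y. (swp u v x = swp u v y) = (x = y)" using swp_inj[OF a(1,2)] .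
  have e5: "(swp u v j = swp u v i + 1) = (j = i + 1)" if "even i"
    using swp_suc[OF a(1,2) that] e4 by metis
  have e6: "(swp u v j = swp u v i - 1) = (j = i - 1)" if "odd i"
    using swp_pred[OF a(1-4) that] e4 by metis
  show ?thesis
  proof (cases "even i")
    case True
    show ?thesis unfolding Theta_def by (simp only: e1 e2 e3 e4 e5[OF True] True if_True)
  next
    case False
    show ?thesis unfolding Theta_def by (simp only: e1 e2 e3 e4 e6[OF False] False if_False)
  qed
qed

lemma sum_swp:
  assumes "even u" "even v" "2 \<le> u" "2 \<le> v" "u+2 \<le> n" "v+2 \<le> n"
  shows "(\<Sum>l=1..n. f (swp u v l)) = (\<Sum>l=1..n. f l)"
  using sum.reindex_bij_betw[OF swp_bij[OF assms], of f] by simp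

lemma ThetaProd_swp:
  assumes "even u" "even v" "2 \<le> u" "2 \<le> v" "u+2 \<le> n" "v+2 \<le> n" "even n"
  shows "ThetaProd n a c k d (swp u v i) (swp u v j) = ThetaProd n a c k d i j"
proof (induction d arbitrary: i j)
  case 0
  then show ?case using swp_inv[OF assms(1,2)] by (simp, metis)
next
  case (Suc d)
  have "ThetaProd n a c k (Suc d) (swp u v i) (swp u v j)
     = (\<Sum>l=1..n. ThetaProd n a c k d (swp u v i) (swp u v l) * Theta n (a (k+d+1)) (c (k+d+1)) (swp u v l) (swp u v j))"
    unfolding ThetaProd.simps matmul_def
    by (rule sum_swp[OF assms(1-6), where f="\<lambda>l. ThetaProd n a c k d (swp u v i) l * Theta n (a (k+d+1)) (c (k+d+1)) l (swp u v j)", symmetric])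
  also have "\<dots> = ThetaProd n a c k (Suc d) i j"
    by (simp add: matmul_def Suc Theta_swp[OF assms])
  finally show ?case .
qed

lemma normcol_swp:
  assumes "even u" "even v" "2 \<le> u" "2 \<le> v" "u+2 \<le> n" "v+2 \<le> n" "even n" "swp u v j = j"
  shows "normcol n a c k j d (swp u v i) = normcol n a c k j d i"
proof -
  have "(\<Sum>r=1..n. ThetaProd n a c k d r j) = (\<Sum>r=1..n. ThetaProd n a c k d (swp u v r) j)"
    using sum_swp[OF assms(1-6), of "\<lambda>r. ThetaProd n a c k d r j"] by simp
  also have "\<dots> = (\<Sum>r=1..n. ThetaProd n a c k d r j)"
    using ThetaProd_swp[OF assms(1-7), of a c k d _ j] assms(8) by simp
  finally show ?thesis
    unfolding normcol_def using ThetaProd_swp[OF assms(1-7), of a c k d i j] assms(8) by simp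
qed

lemma meas_swp:
  fixes lam :: "nat \<Rightarrow> real measure"
  assumes "even u" "even v" "2 \<le> u" "2 \<le> v" "u+2 \<le> n" "v+2 \<le> n" "even n" "swp u v j = j"
    and j: "j \<in> {1..n}" and i: "i \<in> {1..n}"
    and lam_char: "\<And>j k. j \<in> {1..n} \<Longrightarrow>
                 \<exists>L r. r > 0 \<and>
                   (\<forall>i\<in>{1..n}. (\<lambda>d. normcol n a c k j d i) \<longlonglongrightarrow> L i) \<and>
                   (\<forall>i\<in>{1..n}. measure (lam j) (I k i) = r * L i)"
  shows "measure (lam j) (I k (swp u v i)) = measure (lam j) (I k i)"
proof -
  obtain L r where L: "\<forall>i\<in>{1..n}. (\<lambda>d. normcol n a c k j d i) \<longlonglongrightarrow> L i"
    and M: "\<forall>i\<in>{1..n}. measure (lam j) (I k i) = r * L i"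
    using lam_char[OF j] by blast
  have si: "swp u v i \<in> {1..n}" using swp_range[OF assms(1-6) i] .
  have "(\<lambda>d. normcol n a c k j d i) \<longlonglongrightarrow> L (swp u v i)"
  proof -
    have "(\<lambda>d. normcol n a c k j d (swp u v i)) \<longlonglongrightarrow> L (swp u v i)" using L si by blast
    then show ?thesis using normcol_swp[OF assms(1-8)] by simp
  qed
  with L i have "L (swp u v i) = L i" using LIMSEQ_unique by blast
  then show ?thesis using M i si by simp
qed

theorem mainTheorem7:
  fixes n p :: nat
    and a c :: "nat \<Rightarrow> nat"
    and l0 :: "nat \<Rightarrow> real"
    and T :: "real \<Rightarrow> real"
    and I :: "nat \<Rightarrow> nat \<Rightarrow> real set"
    and lam :: "nat \<Rightarrow> real measure"
  assumes n_even: "even n" and n_ge: "n \<ge> 4"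
    and p_ge: "p \<ge> n + 1"
    and c1_pos: "c 1 > 0"
    and a_def: "\<And>k. k \<ge> 1 \<Longrightarrow> a k = p * c k"
    and c_rec: "\<And>k. k \<ge> 1 \<Longrightarrow> c (k + 1) = p^2 * c k"
    and l0_pos: "\<And>i. i \<in> {1..n} \<Longrightarrow> l0 i > 0"
    and l0_sum: "(\<Sum>i=1..n. l0 i) = 1"
    and T_def: "\<And>x. x \<in> {0..<1} \<Longrightarrow> T x = iet_map (pi0 n) l0 x"
    and path: "\<And>K N. N < length (blocks n a c K) \<Longrightarrow>
                 rauzy_type (rauzy_state (pi0 n, l0) N) = Some (blocks n a c K ! N)"
    and I_def: "\<And>k i. I k i =
                 (let s = rauzy_state (pi0 n, l0) (length (blocks n a c k))
                  in subint (fst (fst s)) (snd s) i)"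
    and lam_sets: "\<And>j. j \<in> {1..n} \<Longrightarrow> sets (lam j) = sets (restrict_space borel {0..<1::real})"
    and lam_prob: "\<And>j. j \<in> {1..n} \<Longrightarrow> prob_space (lam j)"
    and lam_meas: "\<And>j. j \<in> {1..n} \<Longrightarrow> T \<in> measurable (lam j) (lam j)"
    and lam_inv: "\<And>j. j \<in> {1..n} \<Longrightarrow> distr (lam j) (lam j) T = lam j"
    and lam_char: "\<And>j k. j \<in> {1..n} \<Longrightarrow>
                 \<exists>L r. r > 0 \<and>
                   (\<forall>i\<in>{1..n}. (\<lambda>d. normcol n a c k j d i) \<longlonglongrightarrow> L i) \<and>
                   (\<forall>i\<in>{1..n}. measure (lam j) (I k i) = r * L i)"
  shows "\<forall>k.
     (\<forall>t\<in>{3..n-1}. \<forall>t'\<in>{3..n-1}. odd t \<and> odd t' \<longrightarrow>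
         measure (lam 1) (I k t) = measure (lam 1) (I k t'))
   \<and> (\<forall>t\<in>{2..n-2}. \<forall>t'\<in>{2..n-2}. even t \<and> even t' \<longrightarrow>
         measure (lam 1) (I k t) = measure (lam 1) (I k t'))
   \<and> (\<forall>m\<in>{3..n-1}. odd m \<longrightarrow>
        (\<forall>t\<in>{3..n-1}. \<forall>t'\<in>{3..n-1}. odd t \<and> odd t' \<and> t \<noteq> m \<and> t' \<noteq> m \<longrightarrow>
            measure (lam m) (I k t) = measure (lam m) (I k t'))
      \<and> (\<forall>t\<in>{2..n-2}. \<forall>t'\<in>{2..n-2}. even t \<and> even t' \<and> t \<noteq> m - 1 \<and> t' \<noteq> m - 1 \<longrightarrow>
            measure (lam m) (I k t) = measure (lam m) (I k t')))"
proof (intro allI conjI ballI impI)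
  have ch: "\<And>j k. j \<in> {1..n} \<Longrightarrow>
                 \<exists>L r. r > 0 \<and>
                   (\<forall>i\<in>{1..n}. (\<lambda>d. normcol n a c k j d i) \<longlonglongrightarrow> L i) \<and>
                   (\<forall>i\<in>{1..n}. measure (lam j) (I k i) = r * L i)" using lam_char by blast
  fix k
  {
    fix j t t' assume j: "j \<in> {1..n}" and t: "t \<in> {3..n-1}" "t' \<in> {3..n-1}" "odd t" "odd t'"
      and jt: "swp (t-1) (t'-1) j = j"
    have "swp (t-1) (t'-1) t = t'" using t unfolding swp_def by auto
    moreover have "t \<in> {1..n}" using t by auto
    moreover have "measure (lam j) (I k (swp (t-1) (t'-1) t)) = measure (lam j) (I k t)"
      by (rule meas_swp[OF _ _ _ _ _ _ n_even jt j _ ch]) (use t n_even in auto)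
    ultimately have "measure (lam j) (I k t') = measure (lam j) (I k t)" by simp
    hence "measure (lam j) (I k t) = measure (lam j) (I k t')" by simp
  } note odd_case = this
  {
    fix j t t' assume j: "j \<in> {1..n}" and t: "t \<in> {2..n-2}" "t' \<in> {2..n-2}" "even t" "even t'"
      and jt: "swp t t' j = j"
    have "swp t t' t = t'" using t unfolding swp_def by auto
    moreover have "t \<in> {1..n}" using t by auto
    moreover have "measure (lam j) (I k (swp (t) (t') t)) = measure (lam j) (I k t)"
      by (rule meas_swp[OF _ _ _ _ _ _ n_even jt j _ ch]) (use t n_even in auto)
    ultimately have "measure (lam j) (I k t') = measure (lam j) (I k t)" by simp
    hence "measure (lam j) (I k t) = measure (lam j) (I k t')" by simp
  } note even_case = this
  show "measure (lam 1) (I k t) = measure (lam 1) (I k t')"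
    if "t \<in> {3..n-1}" "t' \<in> {3..n-1}" "odd t \<and> odd t'" for t t'
    using odd_case[of 1 t t'] that n_ge swp_1[of "t-1" "t'-1" 1] by auto
  show "measure (lam 1) (I k t) = measure (lam 1) (I k t')"
    if "t \<in> {2..n-2}" "t' \<in> {2..n-2}" "even t \<and> even t'" for t t'
    using even_case[of 1 t t'] that n_ge swp_1[of t t' 1] by auto
  show "measure (lam m) (I k t) = measure (lam m) (I k t')"
    if m: "m \<in> {3..n-1}" "odd m" and tt: "t \<in> {3..n-1}" "t' \<in> {3..n-1}" "odd t \<and> odd t' \<and> t \<noteq> m \<and> t' \<noteq> m" for m t t'
  proof -
    have "swp (t-1) (t'-1) m = m" using tt m unfolding swp_def by auto
    then show ?thesis using odd_case[of m t t'] m tt by auto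
  qed
  show "measure (lam m) (I k t) = measure (lam m) (I k t')"
    if m: "m \<in> {3..n-1}" "odd m" and tt: "t \<in> {2..n-2}" "t' \<in> {2..n-2}" "even t \<and> even t' \<and> t \<noteq> m - 1 \<and> t' \<noteq> m - 1" for m t t'
  proof -
    have "swp t t' m = m" using tt m unfolding swp_def by auto
    then show ?thesis using even_case[of m t t'] m tt by auto
  qed
qed

end
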